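(* Let $G$ and $H$ be fermionic groups. Suppose $(-1)^F_H\neq 1$ in $H$, and let $H_b:=H/\langle(-1)^F_H\rangle$. Then \[ 1\to G\xrightarrow{i} G\otimes H\xrightarrow{\pi} H_b\to 1,\qquad i(g)=g\otimes 1,\quad \pi(g\otimes h)=[h], \] is an exact sequence of topological groups. If additionally the grading homomorphism $\theta_G$ of $G$ is nontrivial, then restricting to even parts gives an exact sequence \[ 1\to G_{ev}\xrightarrow{i}(G\otimes H)_{ev}\xrightarrow{\pi} H_b\to 1 . \] Here $G_{ev}=\ker\theta_G$, and $(G\otimes H)_{ev}$ is the kernel of the grading of $G\otimes H$.
   Context: A fermionic group is a topological group $G$ together with a central element $(-1)^F$ with $((-1)^F)^2=1$ and a continuous homomorphism $\theta:G\to\mathbb{Z}_2$ with $\theta((-1)^F)=0$. The fermionic tensor product $G\otimes H$ is the quotient space $(G\times H)/\langle((-1)^F_G,(-1)^F_H)\rangle$, with elements written $g\otimes h$. Its product is $(g_1\otimes h_1)(g_2\otimes h_2)=((-1)^F_G)^{\theta(g_2)\theta(h_1)}g_1g_2\otimes h_1h_2$. Its fermion parity is $(-1)^F_G\otimes 1$, and its grading is $\theta(g\otimes h)=\theta_G(g)+\theta_H(h)$. *)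

theory Defs
  imports "HOL-Analysis.Analysis" "HOL-Algebra.Algebra"
begin

definition topgroup :: "('a, 'm) monoid_scheme \<Rightarrow> 'a topology \<Rightarrow> bool" where
  "topgroup G T \<longleftrightarrow> group G \<and> topspace T = carrier G
     \<and> continuous_map (prod_topology T T) T (\<lambda>(x, y). x \<otimes>\<^bsub>G\<^esub> y)
     \<and> continuous_map T T (\<lambda>x. inv\<^bsub>G\<^esub> x)"

text \<open>Fermionic group (G, T, c, theta): c is the fermion parity (-1)^F, theta the grading.
  Z_2 is represented by bool with addition = exclusive or (True = 1), discrete topology.\<close>
definition fermionic :: "('a, 'm) monoid_scheme \<Rightarrow> 'a topology \<Rightarrow> 'a \<Rightarrow> ('a \<Rightarrow> bool) \<Rightarrow> bool" where
  "fermionic G T c \<theta> \<longleftrightarrow> topgroup G T \<and> c \<in> carrier G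
     \<and> (\<forall>x\<in>carrier G. c \<otimes>\<^bsub>G\<^esub> x = x \<otimes>\<^bsub>G\<^esub> c)
     \<and> c \<otimes>\<^bsub>G\<^esub> c = \<one>\<^bsub>G\<^esub>
     \<and> (\<forall>x\<in>carrier G. \<forall>y\<in>carrier G. \<theta> (x \<otimes>\<^bsub>G\<^esub> y) = (\<theta> x \<noteq> \<theta> y))
     \<and> continuous_map T (discrete_topology UNIV) \<theta>
     \<and> \<not> \<theta> c"

definition quotient_topology :: "'a topology \<Rightarrow> ('a \<Rightarrow> 'b) \<Rightarrow> 'b set \<Rightarrow> 'b topology" where
  "quotient_topology Tp f Y = topology (\<lambda>S. S \<subseteq> Y \<and> openin Tp {x \<in> topspace Tp. f x \<in> S})"

definition ftp_rel :: "('a, 'm) monoid_scheme \<Rightarrow> ('b, 'n) monoid_scheme \<Rightarrow> 'a \<Rightarrow> 'b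
    \<Rightarrow> (('a \<times> 'b) \<times> ('a \<times> 'b)) set" where
  "ftp_rel G H cG cH = {((g, h), (g', h')). g \<in> carrier G \<and> h \<in> carrier H
      \<and> g' \<in> carrier G \<and> h' \<in> carrier H
      \<and> ((g', h') = (g, h) \<or> (g', h') = (cG \<otimes>\<^bsub>G\<^esub> g, cH \<otimes>\<^bsub>H\<^esub> h))}"

definition ftp_elem :: "('a, 'm) monoid_scheme \<Rightarrow> ('b, 'n) monoid_scheme \<Rightarrow> 'a \<Rightarrow> 'b
    \<Rightarrow> 'a \<Rightarrow> 'b \<Rightarrow> ('a \<times> 'b) set" where
  "ftp_elem G H cG cH g h = ftp_rel G H cG cH `` {(g, h)}"

definition ftp :: "('a, 'm) monoid_scheme \<Rightarrow> ('b, 'n) monoid_scheme \<Rightarrow> 'a \<Rightarrow> 'b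
    \<Rightarrow> ('a \<Rightarrow> bool) \<Rightarrow> ('b \<Rightarrow> bool) \<Rightarrow> ('a \<times> 'b) set monoid" where
  "ftp G H cG cH \<theta>G \<theta>H =
     \<lparr> carrier = (carrier G \<times> carrier H) // ftp_rel G H cG cH,
       mult = (\<lambda>x y. let (g1, h1) = (SOME p. p \<in> x); (g2, h2) = (SOME p. p \<in> y) in
                 ftp_elem G H cG cH
                   (if \<theta>G g2 \<and> \<theta>H h1 then cG \<otimes>\<^bsub>G\<^esub> (g1 \<otimes>\<^bsub>G\<^esub> g2) else g1 \<otimes>\<^bsub>G\<^esub> g2)
                   (h1 \<otimes>\<^bsub>H\<^esub> h2)),
       one = ftp_elem G H cG cH \<one>\<^bsub>G\<^esub> \<one>\<^bsub>H\<^esub> \<rparr>"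

definition ftp_top :: "('a, 'm) monoid_scheme \<Rightarrow> ('b, 'n) monoid_scheme \<Rightarrow> 'a \<Rightarrow> 'b
    \<Rightarrow> 'a topology \<Rightarrow> 'b topology \<Rightarrow> ('a \<times> 'b) set topology" where
  "ftp_top G H cG cH TG TH =
     quotient_topology (prod_topology TG TH) (\<lambda>(g, h). ftp_elem G H cG cH g h)
       ((carrier G \<times> carrier H) // ftp_rel G H cG cH)"

definition ftp_grading :: "('a \<Rightarrow> bool) \<Rightarrow> ('b \<Rightarrow> bool) \<Rightarrow> ('a \<times> 'b) set \<Rightarrow> bool" where
  "ftp_grading \<theta>G \<theta>H x = (let (g, h) = (SOME p. p \<in> x) in \<theta>G g \<noteq> \<theta>H h)"

definition bos :: "('b, 'n) monoid_scheme \<Rightarrow> 'b \<Rightarrow> 'b set monoid" where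
  "bos H cH = H Mod {\<one>\<^bsub>H\<^esub>, cH}"

definition bos_top :: "('b, 'n) monoid_scheme \<Rightarrow> 'b \<Rightarrow> 'b topology \<Rightarrow> 'b set topology" where
  "bos_top H cH TH = quotient_topology TH (\<lambda>h. {\<one>\<^bsub>H\<^esub>, cH} #>\<^bsub>H\<^esub> h) (carrier (bos H cH))"

definition ftp_incl :: "('a, 'm) monoid_scheme \<Rightarrow> ('b, 'n) monoid_scheme \<Rightarrow> 'a \<Rightarrow> 'b
    \<Rightarrow> 'a \<Rightarrow> ('a \<times> 'b) set" where
  "ftp_incl G H cG cH g = ftp_elem G H cG cH g \<one>\<^bsub>H\<^esub>"

definition ftp_proj :: "('b, 'n) monoid_scheme \<Rightarrow> 'b \<Rightarrow> ('a \<times> 'b) set \<Rightarrow> 'b set" where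
  "ftp_proj H cH x = {\<one>\<^bsub>H\<^esub>, cH} #>\<^bsub>H\<^esub> snd (SOME p. p \<in> x)"

definition short_exact_top ::
  "('a, 'm) monoid_scheme \<Rightarrow> 'a topology \<Rightarrow> ('b, 'n) monoid_scheme \<Rightarrow> 'b topology
   \<Rightarrow> ('c, 'k) monoid_scheme \<Rightarrow> 'c topology \<Rightarrow> ('a \<Rightarrow> 'b) \<Rightarrow> ('b \<Rightarrow> 'c) \<Rightarrow> bool" where
  "short_exact_top A TA B TB C TC i p \<longleftrightarrow>
     topgroup A TA \<and> topgroup B TB \<and> topgroup C TC
     \<and> i \<in> hom A B \<and> p \<in> hom B C
     \<and> continuous_map TA TB i \<and> continuous_map TB TC p
     \<and> inj_on i (carrier A)
     \<and> i ` carrier A = kernel B C p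
     \<and> p ` carrier B = carrier C"

end

theory Submission
  imports Defs
begin



lemma ferm_D:
  assumes "fermionic G T c \<theta>"
  shows "group G" "topspace T = carrier G"
    "continuous_map (prod_topology T T) T (\<lambda>(x, y). x \<otimes>\<^bsub>G\<^esub> y)"
    "continuous_map T T (\<lambda>x. inv\<^bsub>G\<^esub> x)" "c \<in> carrier G"
    "\<And>x. x \<in> carrier G \<Longrightarrow> c \<otimes>\<^bsub>G\<^esub> x = x \<otimes>\<^bsub>G\<^esub> c"
    "c \<otimes>\<^bsub>G\<^esub> c = \<one>\<^bsub>G\<^esub>"
    "\<And>x y. x \<in> carrier G \<Longrightarrow> y \<in> carrier G \<Longrightarrow> \<theta> (x \<otimes>\<^bsub>G\<^esub> y) = (\<theta> x \<noteq> \<theta> y)"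
    "continuous_map T (discrete_topology UNIV) \<theta>" "\<not> \<theta> c" "topgroup G T"
  using assms unfolding fermionic_def topgroup_def by auto

locale ferm =
  fixes G :: "('a, 'm) monoid_scheme" (structure) and T :: "'a topology" and c :: 'a and \<theta> :: "'a \<Rightarrow> bool"
  assumes ferm: "fermionic G T c \<theta>"
begin

sublocale group G by (rule ferm_D(1)[OF ferm])

lemma c_carr[simp]: "c \<in> carrier G" by (rule ferm_D(5)[OF ferm])
lemma cc[simp]: "c \<otimes> c = \<one>" by (rule ferm_D(7)[OF ferm])
lemma c_comm: "x \<in> carrier G \<Longrightarrow> x \<otimes> c = c \<otimes> x" using ferm_D(6)[OF ferm] by simp
lemma cc2[simp]: "x \<in> carrier G \<Longrightarrow> c \<otimes> (c \<otimes> x) = x"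
  by (simp add: m_assoc[symmetric])
lemma c_mid: "x \<in> carrier G \<Longrightarrow> y \<in> carrier G \<Longrightarrow> x \<otimes> (c \<otimes> y) = c \<otimes> (x \<otimes> y)"
  by (simp add: m_assoc[symmetric] c_comm)
lemma th_mult[simp]: "x \<in> carrier G \<Longrightarrow> y \<in> carrier G \<Longrightarrow> \<theta> (x \<otimes> y) = (\<theta> x \<noteq> \<theta> y)"
  using ferm_D(8)[OF ferm] by simp
lemma th_c[simp]: "\<not> \<theta> c" by (rule ferm_D(10)[OF ferm])
lemma th_one[simp]: "\<not> \<theta> \<one>"
  using th_mult[of \<one> \<one>] by simp
lemma th_inv[simp]: "x \<in> carrier G \<Longrightarrow> \<theta> (inv x) = \<theta> x"
  using th_mult[of x "inv x"] by simp
lemma top_eq: "topspace T = carrier G" by (rule ferm_D(2)[OF ferm])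
lemma topg: "topgroup G T" by (rule ferm_D(11)[OF ferm])
lemma th_cont: "continuous_map T (discrete_topology UNIV) \<theta>" by (rule ferm_D(9)[OF ferm])
lemma inv_c[simp]: "inv c = c" using inv_equality[of c c] by simp

end



lemma istop_quot: "istopology (\<lambda>S. S \<subseteq> Yt \<and> openin Tp {x \<in> topspace Tp. f x \<in> S})"
  unfolding istopology_def
proof (intro conjI allI impI)
  fix S T assume A: "S \<subseteq> Yt \<and> openin Tp {x \<in> topspace Tp. f x \<in> S}" "T \<subseteq> Yt \<and> openin Tp {x \<in> topspace Tp. f x \<in> T}"
  have "openin Tp ({x \<in> topspace Tp. f x \<in> S} \<inter> {x \<in> topspace Tp. f x \<in> T})" using A by (intro openin_Int) auto
  moreover have "{x \<in> topspace Tp. f x \<in> S} \<inter> {x \<in> topspace Tp. f x \<in> T} = {x \<in> topspace Tp. f x \<in> S \<inter> T}" by blast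
  ultimately show "S \<inter> T \<subseteq> Yt" "openin Tp {x \<in> topspace Tp. f x \<in> S \<inter> T}" using A by auto
next
  fix K assume K: "\<forall>S\<in>K. S \<subseteq> Yt \<and> openin Tp {x \<in> topspace Tp. f x \<in> S}"
  have "openin Tp (\<Union>S\<in>K. {x \<in> topspace Tp. f x \<in> S})" using K by blast
  moreover have "(\<Union>S\<in>K. {x \<in> topspace Tp. f x \<in> S}) = {x \<in> topspace Tp. f x \<in> \<Union>K}" by blast
  ultimately show "\<Union>K \<subseteq> Yt" "openin Tp {x \<in> topspace Tp. f x \<in> \<Union>K}" using K by auto
qed

lemma openin_quot: "openin (quotient_topology Tp f Yt) S \<longleftrightarrow> S \<subseteq> Yt \<and> openin Tp {x \<in> topspace Tp. f x \<in> S}"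
  unfolding quotient_topology_def topology_inverse'[OF istop_quot] by simp

lemma topspace_quot:
  assumes "f ` topspace Tp \<subseteq> Yt"
  shows "topspace (quotient_topology Tp f Yt) = Yt"
proof -
  have "{x \<in> topspace Tp. f x \<in> Yt} = topspace Tp" using assms by auto
  then have "openin (quotient_topology Tp f Yt) Yt" by (simp add: openin_quot)
  then have "Yt \<subseteq> topspace (quotient_topology Tp f Yt)" by (simp add: openin_subset)
  moreover have "topspace (quotient_topology Tp f Yt) \<subseteq> Yt"
    using openin_quot[of Tp f Yt "topspace (quotient_topology Tp f Yt)"] by simp
  ultimately show ?thesis by blast
qed

lemma quotient_map_quot:
  assumes "f ` topspace Tp = Yt"
  shows "quotient_map Tp (quotient_topology Tp f Yt) f"
  unfolding quotient_map_def using assms by (simp add: topspace_quot openin_quot)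

lemma cont_quot_map:
  assumes "f ` topspace Tp = Yt"
  shows "continuous_map Tp (quotient_topology Tp f Yt) f"
  using quotient_map_quot[OF assms] quotient_imp_continuous_map by blast

lemma open_map_quot:
  assumes "f ` topspace Tp = Yt"
    and "\<And>U. openin Tp U \<Longrightarrow> openin Tp {x \<in> topspace Tp. f x \<in> f ` U}"
  shows "open_map Tp (quotient_topology Tp f Yt) f"
  unfolding open_map_def openin_quot
proof (intro allI impI conjI)
  fix U assume U: "openin Tp U"
  then show "f ` U \<subseteq> Yt" using assms(1) openin_subset by blast
  show "openin Tp {x \<in> topspace Tp. f x \<in> f ` U}" using assms(2) U by blast
qed

lemma open_map_prod2:
  assumes f: "open_map Xt X2t f" and g: "open_map Yt Y2t g"
  shows "open_map (prod_topology Xt Yt) (prod_topology X2t Y2t) (\<lambda>(x, y). (f x, g y))"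
  unfolding open_map_def
proof (intro allI impI)
  fix W assume W: "openin (prod_topology Xt Yt) W"
  show "openin (prod_topology X2t Y2t) ((\<lambda>(x, y). (f x, g y)) ` W)"
    unfolding openin_prod_topology_alt
  proof (intro allI impI)
    fix a b assume "(a, b) \<in> (\<lambda>(x, y). (f x, g y)) ` W"
    then obtain x y where xy: "(x, y) \<in> W" "a = f x" "b = g y" by auto
    then obtain U V where UV: "openin Xt U" "openin Yt V" "x \<in> U" "y \<in> V" "U \<times> V \<subseteq> W"
      using W unfolding openin_prod_topology_alt by metis
    have "openin X2t (f ` U)" "openin Y2t (g ` V)" using f g UV unfolding open_map_def by auto
    moreover have "f ` U \<times> g ` V \<subseteq> (\<lambda>(x, y). (f x, g y)) ` W" using UV(5) by force
    ultimately show "\<exists>U V. openin X2t U \<and> openin Y2t V \<and> a \<in> U \<and> b \<in> V \<and> U \<times> V \<subseteq> (\<lambda>(x, y). (f x, g y)) ` W"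
      using xy UV by blast
  qed
qed

lemma quot_cont2:
  assumes q: "quotient_map Xt Qt q" and o: "open_map Xt Qt q"
    and m: "continuous_map (prod_topology Xt Xt) Xt (\<lambda>(a, b). m a b)"
    and eq: "\<And>a b. a \<in> topspace Xt \<Longrightarrow> b \<in> topspace Xt \<Longrightarrow> M (q a) (q b) = q (m a b)"
  shows "continuous_map (prod_topology Qt Qt) Qt (\<lambda>(x, y). M x y)"
proof -
  have qc: "continuous_map Xt Qt q" using q quotient_imp_continuous_map by blast
  have qs: "q ` topspace Xt = topspace Qt" using q quotient_imp_surjective_map by blast
  let ?qq = "\<lambda>(a, b). (q a, q b)"
  have c1: "continuous_map (prod_topology Xt Xt) (prod_topology Qt Qt) ?qq"
  proof -
    have "continuous_map (prod_topology Xt Xt) Qt (\<lambda>p. q (fst p))"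
      using continuous_map_compose[OF continuous_map_fst qc] by (simp add: o_def)
    moreover have "continuous_map (prod_topology Xt Xt) Qt (\<lambda>p. q (snd p))"
      using continuous_map_compose[OF continuous_map_snd qc] by (simp add: o_def)
    ultimately show ?thesis by (simp add: continuous_map_paired case_prod_unfold)
  qed
  have o1: "open_map (prod_topology Xt Xt) (prod_topology Qt Qt) ?qq" by (rule open_map_prod2[OF o o])
  have s1: "?qq ` topspace (prod_topology Xt Xt) = topspace (prod_topology Qt Qt)"
  proof
    show "?qq ` topspace (prod_topology Xt Xt) \<subseteq> topspace (prod_topology Qt Qt)" using qs by auto
    show "topspace (prod_topology Qt Qt) \<subseteq> ?qq ` topspace (prod_topology Xt Xt)"
    proof
      fix p assume "p \<in> topspace (prod_topology Qt Qt)"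
      then obtain a b where ab: "p = (a, b)" "a \<in> topspace Qt" "b \<in> topspace Qt" by auto
      then obtain x y where "x \<in> topspace Xt" "y \<in> topspace Xt" "a = q x" "b = q y" using qs by (metis imageE)
      then show "p \<in> ?qq ` topspace (prod_topology Xt Xt)" using ab by force
    qed
  qed
  have qq: "quotient_map (prod_topology Xt Xt) (prod_topology Qt Qt) ?qq"
    using continuous_open_quotient_map[OF c1 o1] s1 by simp
  have "continuous_map (prod_topology Xt Xt) Qt (q \<circ> (\<lambda>(a, b). m a b))"
    using continuous_map_compose[OF m qc] .
  then have "continuous_map (prod_topology Xt Xt) Qt ((\<lambda>(x, y). M x y) \<circ> ?qq)"
    by (rule continuous_map_eq) (auto simp: eq)
  then show ?thesis using continuous_compose_quotient_map[OF qq] by blast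
qed

lemma quot_cont1:
  assumes q: "quotient_map Xt Qt q"
    and m: "continuous_map Xt Xt m"
    and eq: "\<And>a. a \<in> topspace Xt \<Longrightarrow> M (q a) = q (m a)"
  shows "continuous_map Qt Qt M"
proof -
  have qc: "continuous_map Xt Qt q" using q quotient_imp_continuous_map by blast
  have "continuous_map Xt Qt (q \<circ> m)" using continuous_map_compose[OF m qc] .
  then have "continuous_map Xt Qt (M \<circ> q)"
    by (rule continuous_map_eq) (auto simp: eq)
  then show ?thesis using continuous_compose_quotient_map[OF q] by blast
qed

lemma cont_if_disc:
  assumes P: "continuous_map Xt (discrete_topology UNIV) P"
    and f: "continuous_map Xt Yt f" and g: "continuous_map Xt Yt g"
  shows "continuous_map Xt Yt (\<lambda>x. if P x then f x else g x)"
  unfolding continuous_map_def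
proof (intro conjI allI impI ballI)
  show "(\<lambda>x. if P x then f x else g x) \<in> topspace Xt \<rightarrow> topspace Yt"
    using f g by (auto simp: continuous_map_def)
next
  fix U assume U: "openin Yt U"
  have PU: "\<And>U. openin Xt {x \<in> topspace Xt. P x \<in> U}" using P by (simp add: continuous_map_def)
  have o1: "openin Xt {x \<in> topspace Xt. P x \<in> {True}}" "openin Xt {x \<in> topspace Xt. P x \<in> {False}}"
    using PU[of "{True}"] PU[of "{False}"] by simp_all
  have o2: "openin Xt {x \<in> topspace Xt. f x \<in> U}" "openin Xt {x \<in> topspace Xt. g x \<in> U}"
    using f g U unfolding continuous_map_def by auto
  have "{x \<in> topspace Xt. (if P x then f x else g x) \<in> U} =
     ({x \<in> topspace Xt. P x \<in> {True}} \<inter> {x \<in> topspace Xt. f x \<in> U}) \<union>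
     ({x \<in> topspace Xt. P x \<in> {False}} \<inter> {x \<in> topspace Xt. g x \<in> U})" by auto
  then show "openin Xt {x \<in> topspace Xt. (if P x then f x else g x) \<in> U}"
    using o1 o2 by auto
qed

lemma cont_conj_disc:
  assumes "continuous_map Xt (discrete_topology UNIV) P" "continuous_map Xt (discrete_topology UNIV) Qt"
  shows "continuous_map Xt (discrete_topology UNIV) (\<lambda>x. P x \<and> Qt x)"
proof -
  have "continuous_map Xt (discrete_topology UNIV) (\<lambda>x. if P x then Qt x else False)"
    by (rule cont_if_disc[OF assms]) simp
  then show ?thesis by (rule continuous_map_eq) auto
qed

lemma tg_mult_cont:
  assumes "topgroup G T" "continuous_map Zt T f" "continuous_map Zt T g"
  shows "continuous_map Zt T (\<lambda>z. f z \<otimes>\<^bsub>G\<^esub> g z)"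
proof -
  have "continuous_map Zt (prod_topology T T) (\<lambda>z. (f z, g z))" using assms by (simp add: continuous_map_paired)
  moreover have "continuous_map (prod_topology T T) T (\<lambda>(x, y). x \<otimes>\<^bsub>G\<^esub> y)"
    using assms(1) unfolding topgroup_def by simp
  ultimately have "continuous_map Zt T ((\<lambda>(x, y). x \<otimes>\<^bsub>G\<^esub> y) \<circ> (\<lambda>z. (f z, g z)))"
    by (rule continuous_map_compose)
  then show ?thesis by (simp add: o_def)
qed

lemma tg_inv_cont:
  assumes "topgroup G T" "continuous_map Zt T f"
  shows "continuous_map Zt T (\<lambda>z. inv\<^bsub>G\<^esub> f z)"
proof -
  have "continuous_map T T (\<lambda>x. inv\<^bsub>G\<^esub> x)" using assms(1) unfolding topgroup_def by simp
  from continuous_map_compose[OF assms(2) this] show ?thesis by (simp add: o_def)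
qed

lemma cfst: "continuous_map Zt (prod_topology Xt Yt) f \<Longrightarrow> continuous_map Zt Xt (\<lambda>z. fst (f z))"
  using continuous_map_fst_of by (metis comp_apply continuous_map_eq)
lemma csnd: "continuous_map Zt (prod_topology Xt Yt) f \<Longrightarrow> continuous_map Zt Yt (\<lambda>z. snd (f z))"
  using continuous_map_snd_of by (metis comp_apply continuous_map_eq)
lemma cid: "continuous_map Xt Xt (\<lambda>z. z)"
  using continuous_map_id unfolding id_def .



locale fp = G: ferm G TG cG \<theta>G + H: ferm H TH cH \<theta>H
  for G :: "('a, 'm) monoid_scheme" and TG cG \<theta>G and H :: "('b, 'n) monoid_scheme" and TH cH \<theta>H
begin

abbreviation cls where "cls g h \<equiv> ftp_elem G H cG cH g h"
abbreviation FF where "FF \<equiv> ftp G H cG cH \<theta>G \<theta>H"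

definition mm where "mm g1 h1 g2 h2 = (if \<theta>G g2 \<and> \<theta>H h1 then cG \<otimes>\<^bsub>G\<^esub> (g1 \<otimes>\<^bsub>G\<^esub> g2) else g1 \<otimes>\<^bsub>G\<^esub> g2)"

lemma cls_eq: "g \<in> carrier G \<Longrightarrow> h \<in> carrier H \<Longrightarrow> cls g h = {(g, h), (cG \<otimes>\<^bsub>G\<^esub> g, cH \<otimes>\<^bsub>H\<^esub> h)}"
  unfolding ftp_elem_def ftp_rel_def by auto

lemma carrier_FF: "x \<in> carrier FF \<longleftrightarrow> (\<exists>g\<in>carrier G. \<exists>h\<in>carrier H. x = cls g h)"
  unfolding ftp_def quotient_def ftp_elem_def by auto

lemma cls_in[simp]: "g \<in> carrier G \<Longrightarrow> h \<in> carrier H \<Longrightarrow> cls g h \<in> carrier FF"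
  using carrier_FF by blast

lemma cls_c[simp]: "g \<in> carrier G \<Longrightarrow> h \<in> carrier H \<Longrightarrow> cls (cG \<otimes>\<^bsub>G\<^esub> g) (cH \<otimes>\<^bsub>H\<^esub> h) = cls g h"
  by (simp add: cls_eq insert_commute)

lemma cls_iff: "g \<in> carrier G \<Longrightarrow> h \<in> carrier H \<Longrightarrow> g' \<in> carrier G \<Longrightarrow> h' \<in> carrier H \<Longrightarrow>
   cls g h = cls g' h' \<longleftrightarrow> (g' = g \<and> h' = h) \<or> (g' = cG \<otimes>\<^bsub>G\<^esub> g \<and> h' = cH \<otimes>\<^bsub>H\<^esub> h)"
proof
  assume g: "g \<in> carrier G" "h \<in> carrier H" "g' \<in> carrier G" "h' \<in> carrier H" and e: "cls g h = cls g' h'"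
  have "(g', h') \<in> cls g' h'" using g by (simp add: cls_eq)
  then have "(g', h') \<in> cls g h" using e by simp
  then show "(g' = g \<and> h' = h) \<or> (g' = cG \<otimes>\<^bsub>G\<^esub> g \<and> h' = cH \<otimes>\<^bsub>H\<^esub> h)" using g by (simp add: cls_eq)
next
  assume g: "g \<in> carrier G" "h \<in> carrier H" "g' \<in> carrier G" "h' \<in> carrier H"
    and "(g' = g \<and> h' = h) \<or> (g' = cG \<otimes>\<^bsub>G\<^esub> g \<and> h' = cH \<otimes>\<^bsub>H\<^esub> h)"
  then show "cls g h = cls g' h'" by auto
qed

lemma mem_cls: "g \<in> carrier G \<Longrightarrow> h \<in> carrier H \<Longrightarrow> p \<in> cls g h \<Longrightarrow>
   fst p \<in> carrier G \<and> snd p \<in> carrier H \<and> cls (fst p) (snd p) = cls g h"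
  by (auto simp: cls_eq)

lemma some_cls: "g \<in> carrier G \<Longrightarrow> h \<in> carrier H \<Longrightarrow> (SOME p. p \<in> cls g h) \<in> cls g h"
  by (rule someI[of _ "(g, h)"]) (simp add: cls_eq)

lemma mm_carr[simp]: "g1 \<in> carrier G \<Longrightarrow> g2 \<in> carrier G \<Longrightarrow> mm g1 h1 g2 h2 \<in> carrier G"
  by (simp add: mm_def)

lemma mm_c1: "g1 \<in> carrier G \<Longrightarrow> h1 \<in> carrier H \<Longrightarrow> g2 \<in> carrier G \<Longrightarrow> h2 \<in> carrier H \<Longrightarrow>
  mm (cG \<otimes>\<^bsub>G\<^esub> g1) (cH \<otimes>\<^bsub>H\<^esub> h1) g2 h2 = cG \<otimes>\<^bsub>G\<^esub> mm g1 h1 g2 h2"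
  by (simp add: mm_def G.m_assoc)

lemma mm_c2: "g1 \<in> carrier G \<Longrightarrow> h1 \<in> carrier H \<Longrightarrow> g2 \<in> carrier G \<Longrightarrow> h2 \<in> carrier H \<Longrightarrow>
  mm g1 h1 (cG \<otimes>\<^bsub>G\<^esub> g2) (cH \<otimes>\<^bsub>H\<^esub> h2) = cG \<otimes>\<^bsub>G\<^esub> mm g1 h1 g2 h2"
  by (simp add: mm_def G.m_assoc G.c_mid[of g1])

lemma mm_resp:
  assumes "g1 \<in> carrier G" "h1 \<in> carrier H" "g2 \<in> carrier G" "h2 \<in> carrier H"
    "p \<in> cls g1 h1" "q \<in> cls g2 h2"
  shows "cls (mm (fst p) (snd p) (fst q) (snd q)) (snd p \<otimes>\<^bsub>H\<^esub> snd q) = cls (mm g1 h1 g2 h2) (h1 \<otimes>\<^bsub>H\<^esub> h2)"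
proof -
  have A: "cls (mm g1' h1' g2 h2) (h1' \<otimes>\<^bsub>H\<^esub> h2) = cls (mm g1 h1 g2 h2) (h1 \<otimes>\<^bsub>H\<^esub> h2)"
    if "(g1', h1') \<in> cls g1 h1" for g1' h1'
    using that assms(1-4) by (auto simp: cls_eq mm_c1 H.m_assoc)
  have B: "cls (mm g1' h1' g2' h2') (h1' \<otimes>\<^bsub>H\<^esub> h2') = cls (mm g1' h1' g2 h2) (h1' \<otimes>\<^bsub>H\<^esub> h2)"
    if "(g2', h2') \<in> cls g2 h2" "g1' \<in> carrier G" "h1' \<in> carrier H" for g1' h1' g2' h2'
    using that assms(1-4) by (auto simp: cls_eq mm_c2 H.m_assoc H.c_mid[of h1'])
  obtain a b where p: "p = (a, b)" by force
  obtain a' b' where q: "q = (a', b')" by force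
  have "a \<in> carrier G" "b \<in> carrier H" using mem_cls[OF assms(1,2,5)] p by auto
  then show ?thesis using A[of a b] B[of a' b' a b] assms p q by simp
qed

lemma mult_cls:
  assumes "g1 \<in> carrier G" "h1 \<in> carrier H" "g2 \<in> carrier G" "h2 \<in> carrier H"
  shows "cls g1 h1 \<otimes>\<^bsub>FF\<^esub> cls g2 h2 = cls (mm g1 h1 g2 h2) (h1 \<otimes>\<^bsub>H\<^esub> h2)"
proof -
  have "cls g1 h1 \<otimes>\<^bsub>FF\<^esub> cls g2 h2 =
     cls (mm (fst (SOME p. p \<in> cls g1 h1)) (snd (SOME p. p \<in> cls g1 h1)) (fst (SOME p. p \<in> cls g2 h2)) (snd (SOME p. p \<in> cls g2 h2)))
         (snd (SOME p. p \<in> cls g1 h1) \<otimes>\<^bsub>H\<^esub> snd (SOME p. p \<in> cls g2 h2))"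
    by (simp add: ftp_def Let_def split_def mm_def)
  then show ?thesis using mm_resp[OF assms some_cls[OF assms(1,2)] some_cls[OF assms(3,4)]] by simp
qed

lemma one_FF: "\<one>\<^bsub>FF\<^esub> = cls \<one>\<^bsub>G\<^esub> \<one>\<^bsub>H\<^esub>"
  by (simp add: ftp_def)

lemma mm_assoc:
  assumes "g1 \<in> carrier G" "h1 \<in> carrier H" "g2 \<in> carrier G" "h2 \<in> carrier H" "g3 \<in> carrier G" "h3 \<in> carrier H"
  shows "mm (mm g1 h1 g2 h2) (h1 \<otimes>\<^bsub>H\<^esub> h2) g3 h3 = mm g1 h1 (mm g2 h2 g3 h3) (h2 \<otimes>\<^bsub>H\<^esub> h3)"
  using assms by (cases "\<theta>G g2"; cases "\<theta>G g3"; cases "\<theta>H h1"; cases "\<theta>H h2")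
    (simp_all add: mm_def G.m_assoc G.c_mid[of g1])

lemma group_FF: "group FF"
proof (rule groupI)
  fix x y assume "x \<in> carrier FF" "y \<in> carrier FF"
  then obtain g h g' h' where "g \<in> carrier G" "h \<in> carrier H" "x = cls g h"
     "g' \<in> carrier G" "h' \<in> carrier H" "y = cls g' h'" by (auto simp: carrier_FF)
  then show "x \<otimes>\<^bsub>FF\<^esub> y \<in> carrier FF" by (simp add: mult_cls)
next
  show "\<one>\<^bsub>FF\<^esub> \<in> carrier FF" by (simp add: one_FF)
next
  fix x y z assume "x \<in> carrier FF" "y \<in> carrier FF" "z \<in> carrier FF"
  then show "x \<otimes>\<^bsub>FF\<^esub> y \<otimes>\<^bsub>FF\<^esub> z = x \<otimes>\<^bsub>FF\<^esub> (y \<otimes>\<^bsub>FF\<^esub> z)"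
    by (auto simp: carrier_FF mult_cls mm_assoc H.m_assoc)
next
  fix x assume "x \<in> carrier FF"
  then show "\<one>\<^bsub>FF\<^esub> \<otimes>\<^bsub>FF\<^esub> x = x" by (auto simp: carrier_FF mult_cls one_FF mm_def)
next
  fix x assume "x \<in> carrier FF"
  then obtain g h where gh: "g \<in> carrier G" "h \<in> carrier H" "x = cls g h" by (auto simp: carrier_FF)
  let ?y = "cls (if \<theta>G g \<and> \<theta>H h then cG \<otimes>\<^bsub>G\<^esub> inv\<^bsub>G\<^esub> g else inv\<^bsub>G\<^esub> g) (inv\<^bsub>H\<^esub> h)"
  have "?y \<otimes>\<^bsub>FF\<^esub> x = \<one>\<^bsub>FF\<^esub>" using gh
    by (simp add: mult_cls one_FF mm_def G.m_assoc)
  moreover have "?y \<in> carrier FF" using gh by simp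
  ultimately show "\<exists>y\<in>carrier FF. y \<otimes>\<^bsub>FF\<^esub> x = \<one>\<^bsub>FF\<^esub>" by blast
qed

end



context fp begin

abbreviation PT where "PT \<equiv> prod_topology TG TH"
abbreviation QF where "QF \<equiv> ftp_top G H cG cH TG TH"

lemma topspace_PT: "topspace PT = carrier G \<times> carrier H"
  by (simp add: G.top_eq H.top_eq)

lemma QF_eq: "QF = quotient_topology PT (\<lambda>(g, h). cls g h) (carrier FF)"
  by (simp add: ftp_top_def ftp_def)

lemma q_img: "(\<lambda>(g, h). cls g h) ` topspace PT = carrier FF"
  unfolding topspace_PT by (auto simp: carrier_FF image_iff; blast)

lemma topspace_QF: "topspace QF = carrier FF"
  unfolding QF_eq using q_img by (simp add: topspace_quot)

lemma quot_q: "quotient_map PT QF (\<lambda>(g, h). cls g h)"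
  unfolding QF_eq by (rule quotient_map_quot[OF q_img])

lemma cont_q: "continuous_map PT QF (\<lambda>(g, h). cls g h)"
  using quot_q quotient_imp_continuous_map by blast

lemma sigma_cont: "continuous_map PT PT (\<lambda>p. (cG \<otimes>\<^bsub>G\<^esub> fst p, cH \<otimes>\<^bsub>H\<^esub> snd p))"
proof -
  have "continuous_map PT TG (\<lambda>p. cG \<otimes>\<^bsub>G\<^esub> fst p)"
    by (rule tg_mult_cont[OF G.topg]) (auto simp: G.top_eq continuous_map_fst)
  moreover have "continuous_map PT TH (\<lambda>p. cH \<otimes>\<^bsub>H\<^esub> snd p)"
    by (rule tg_mult_cont[OF H.topg]) (auto simp: H.top_eq continuous_map_snd)
  ultimately show ?thesis by (simp add: continuous_map_paired)
qed

lemma open_q: "open_map PT QF (\<lambda>(g, h). cls g h)"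
  unfolding QF_eq
proof (rule open_map_quot[OF q_img])
  fix U assume U: "openin PT U"
  then have Usub: "U \<subseteq> carrier G \<times> carrier H" using openin_subset topspace_PT by metis
  let ?s = "\<lambda>p. (cG \<otimes>\<^bsub>G\<^esub> fst p, cH \<otimes>\<^bsub>H\<^esub> snd p)"
  have eq: "{x \<in> topspace PT. (\<lambda>(g, h). cls g h) x \<in> (\<lambda>(g, h). cls g h) ` U} = U \<union> {p \<in> topspace PT. ?s p \<in> U}"
  proof (intro equalityI subsetI)
    fix p assume "p \<in> {x \<in> topspace PT. (\<lambda>(g, h). cls g h) x \<in> (\<lambda>(g, h). cls g h) ` U}"
    then obtain g h g' h' where p: "p = (g, h)" "g \<in> carrier G" "h \<in> carrier H" "(g', h') \<in> U"
      "cls g h = cls g' h'" unfolding topspace_PT by auto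
    then have "g' \<in> carrier G" "h' \<in> carrier H" using Usub by auto
    then have "(g' = g \<and> h' = h) \<or> (g' = cG \<otimes>\<^bsub>G\<^esub> g \<and> h' = cH \<otimes>\<^bsub>H\<^esub> h)" using cls_iff p by blast
    then show "p \<in> U \<union> {p \<in> topspace PT. ?s p \<in> U}" using p unfolding topspace_PT by auto
  next
    fix p assume A: "p \<in> U \<union> {p \<in> topspace PT. ?s p \<in> U}"
    show "p \<in> {x \<in> topspace PT. (\<lambda>(g, h). cls g h) x \<in> (\<lambda>(g, h). cls g h) ` U}"
    proof (cases "p \<in> U")
      case True then show ?thesis using Usub topspace_PT by auto
    next
      case False
      then obtain g h where p: "p = (g, h)" "g \<in> carrier G" "h \<in> carrier H" "?s p \<in> U"
        using A topspace_PT by auto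
      then have "cls g h = (\<lambda>(g, h). cls g h) (?s p)" by simp
      then show ?thesis using p topspace_PT by (auto intro!: image_eqI[of _ _ "?s p"])
    qed
  qed
  have "openin PT {p \<in> topspace PT. ?s p \<in> U}"
    using openin_continuous_map_preimage[OF sigma_cont U] .
  then show "openin PT {x \<in> topspace PT. (\<lambda>(g, h). cls g h) x \<in> (\<lambda>(g, h). cls g h) ` U}"
    unfolding eq using U by (intro openin_Un)
qed

lemma inv_cls: "g \<in> carrier G \<Longrightarrow> h \<in> carrier H \<Longrightarrow>
  inv\<^bsub>FF\<^esub> (cls g h) = cls (if \<theta>G g \<and> \<theta>H h then cG \<otimes>\<^bsub>G\<^esub> inv\<^bsub>G\<^esub> g else inv\<^bsub>G\<^esub> g) (inv\<^bsub>H\<^esub> h)"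
  by (rule group.inv_equality[OF group_FF]) (simp_all add: mult_cls one_FF mm_def G.m_assoc)

lemma topgroup_FF: "topgroup FF QF"
  unfolding topgroup_def
proof (intro conjI)
  show "group FF" by (rule group_FF)
  show "topspace QF = carrier FF" by (rule topspace_QF)
  let ?Z = "prod_topology PT PT"
  have p1: "continuous_map ?Z TG (\<lambda>z. fst (fst z))" by (rule cfst[OF continuous_map_fst])
  have p2: "continuous_map ?Z TH (\<lambda>z. snd (fst z))" by (rule csnd[OF continuous_map_fst])
  have p3: "continuous_map ?Z TG (\<lambda>z. fst (snd z))" by (rule cfst[OF continuous_map_snd])
  have p4: "continuous_map ?Z TH (\<lambda>z. snd (snd z))" by (rule csnd[OF continuous_map_snd])
  have cc: "continuous_map ?Z TG (\<lambda>z. cG)" by (simp add: G.top_eq)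
  have th: "continuous_map ?Z (discrete_topology UNIV) (\<lambda>z. \<theta>G (fst (snd z)) \<and> \<theta>H (snd (fst z)))"
    by (intro cont_conj_disc continuous_map_compose[OF p3 G.th_cont, unfolded o_def]
        continuous_map_compose[OF p2 H.th_cont, unfolded o_def])
  have gm: "continuous_map ?Z TG (\<lambda>z. fst (fst z) \<otimes>\<^bsub>G\<^esub> fst (snd z))"
    by (rule tg_mult_cont[OF G.topg p1 p3])
  have m1: "continuous_map ?Z TG (\<lambda>z. mm (fst (fst z)) (snd (fst z)) (fst (snd z)) (snd (snd z)))"
    unfolding mm_def
    by (rule cont_if_disc[OF th tg_mult_cont[OF G.topg cc gm] gm])
  have m2: "continuous_map ?Z TH (\<lambda>z. snd (fst z) \<otimes>\<^bsub>H\<^esub> snd (snd z))"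
    by (rule tg_mult_cont[OF H.topg p2 p4])
  have m: "continuous_map ?Z PT (\<lambda>(a, b). (mm (fst a) (snd a) (fst b) (snd b), snd a \<otimes>\<^bsub>H\<^esub> snd b))"
    using m1 m2 by (simp add: continuous_map_paired case_prod_unfold)
  show "continuous_map (prod_topology QF QF) QF (\<lambda>(x, y). x \<otimes>\<^bsub>FF\<^esub> y)"
    by (rule quot_cont2[OF quot_q open_q m]) (auto simp: G.top_eq H.top_eq mult_cls)
  have i1: "continuous_map PT TG (\<lambda>z. if \<theta>G (fst z) \<and> \<theta>H (snd z) then cG \<otimes>\<^bsub>G\<^esub> inv\<^bsub>G\<^esub> (fst z) else inv\<^bsub>G\<^esub> (fst z))"
  proof (rule cont_if_disc)
    show "continuous_map PT (discrete_topology UNIV) (\<lambda>z. \<theta>G (fst z) \<and> \<theta>H (snd z))"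
      by (intro cont_conj_disc continuous_map_compose[OF continuous_map_fst G.th_cont, unfolded o_def]
        continuous_map_compose[OF continuous_map_snd H.th_cont, unfolded o_def])
    have "continuous_map PT TG (\<lambda>z. inv\<^bsub>G\<^esub> (fst z))" by (rule tg_inv_cont[OF G.topg continuous_map_fst])
    then show "continuous_map PT TG (\<lambda>z. inv\<^bsub>G\<^esub> (fst z))"
      "continuous_map PT TG (\<lambda>z. cG \<otimes>\<^bsub>G\<^esub> inv\<^bsub>G\<^esub> (fst z))"
      by (auto intro!: tg_mult_cont[OF G.topg] simp: G.top_eq)
  qed
  have i2: "continuous_map PT TH (\<lambda>z. inv\<^bsub>H\<^esub> (snd z))" by (rule tg_inv_cont[OF H.topg continuous_map_snd])
  have i: "continuous_map PT PT (\<lambda>z. (if \<theta>G (fst z) \<and> \<theta>H (snd z) then cG \<otimes>\<^bsub>G\<^esub> inv\<^bsub>G\<^esub> (fst z) else inv\<^bsub>G\<^esub> (fst z), inv\<^bsub>H\<^esub> (snd z)))"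
    using i1 i2 by (simp add: continuous_map_paired)
  show "continuous_map QF QF (\<lambda>x. inv\<^bsub>FF\<^esub> x)"
    by (rule quot_cont1[OF quot_q i]) (auto simp: G.top_eq H.top_eq inv_cls)
qed

end



context ferm begin

abbreviation NN where "NN \<equiv> {\<one>, c}"
abbreviation qb where "qb \<equiv> (\<lambda>x. NN #> x)"

lemma NN_normal: "NN \<lhd> G"
proof -
  have sg: "subgroup NN G"
  proof (rule subgroupI)
    fix a b assume "a \<in> NN" "b \<in> NN"
    then show "a \<otimes> b \<in> NN" by auto
  qed auto
  show ?thesis unfolding normal_inv_iff
  proof (intro conjI sg ballI)
    fix x h assume x: "x \<in> carrier G" and "h \<in> NN"
    then have "h = \<one> \<or> h = c" by auto
    then show "x \<otimes> h \<otimes> inv x \<in> NN"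
      using x by (auto simp: c_comm m_assoc)
  qed
qed

interpretation N: normal NN G by (rule NN_normal)

lemma rcos_eq: "x \<in> carrier G \<Longrightarrow> qb x = {x, c \<otimes> x}"
  by (auto simp: r_coset_def)

lemma qb_iff: "x \<in> carrier G \<Longrightarrow> u \<in> carrier G \<Longrightarrow> qb x = qb u \<longleftrightarrow> u = x \<or> u = c \<otimes> x"
  by (auto simp: rcos_eq doubleton_eq_iff)

abbreviation BB where "BB \<equiv> bos G c"
abbreviation QB where "QB \<equiv> bos_top G c T"

lemma carrier_BB: "carrier BB = qb ` carrier G"
  unfolding bos_def by (rule carrier_FactGroup)

lemma QB_eq: "QB = quotient_topology T qb (carrier BB)"
  by (simp add: bos_top_def)

lemma qb_img: "qb ` topspace T = carrier BB"
  by (simp add: carrier_BB top_eq)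

lemma topspace_QB: "topspace QB = carrier BB"
  unfolding QB_eq using qb_img by (simp add: topspace_quot)

lemma quot_qb: "quotient_map T QB qb"
  unfolding QB_eq by (rule quotient_map_quot[OF qb_img])

lemma cont_qb: "continuous_map T QB qb"
  using quot_qb quotient_imp_continuous_map by blast

lemma open_qb: "open_map T QB qb"
  unfolding QB_eq
proof (rule open_map_quot[OF qb_img])
  fix U assume U: "openin T U"
  then have Usub: "U \<subseteq> carrier G" using openin_subset top_eq by metis
  have eq: "{x \<in> topspace T. qb x \<in> qb ` U} = U \<union> {x \<in> topspace T. c \<otimes> x \<in> U}"
  proof (intro equalityI subsetI)
    fix x assume "x \<in> {x \<in> topspace T. qb x \<in> qb ` U}"
    then obtain u where x: "x \<in> carrier G" "u \<in> U" "qb x = qb u" unfolding top_eq by auto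
    then have "u = x \<or> u = c \<otimes> x" using qb_iff Usub by blast
    then show "x \<in> U \<union> {x \<in> topspace T. c \<otimes> x \<in> U}" using x top_eq by auto
  next
    fix x assume A: "x \<in> U \<union> {x \<in> topspace T. c \<otimes> x \<in> U}"
    show "x \<in> {x \<in> topspace T. qb x \<in> qb ` U}"
    proof (cases "x \<in> U")
      case True then show ?thesis using Usub top_eq by auto
    next
      case False
      then have x: "x \<in> carrier G" "c \<otimes> x \<in> U" using A top_eq by auto
      then have "qb x = qb (c \<otimes> x)" using qb_iff by simp
      then show ?thesis using x top_eq by (auto intro!: image_eqI[of _ _ "c \<otimes> x"])
    qed
  qed
  have "continuous_map T T (\<lambda>x. c \<otimes> x)"
    by (rule tg_mult_cont[OF topg]) (auto simp: top_eq cid)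
  then have "openin T {x \<in> topspace T. c \<otimes> x \<in> U}"
    using openin_continuous_map_preimage U by blast
  then show "openin T {x \<in> topspace T. qb x \<in> qb ` U}"
    unfolding eq using U by (intro openin_Un)
qed

lemma group_BB: "group BB"
  unfolding bos_def by (rule N.factorgroup_is_group)

lemma mult_qb: "x \<in> carrier G \<Longrightarrow> y \<in> carrier G \<Longrightarrow> qb x \<otimes>\<^bsub>BB\<^esub> qb y = qb (x \<otimes> y)"
  unfolding bos_def by (simp add: N.rcos_sum)

lemma inv_qb: "x \<in> carrier G \<Longrightarrow> inv\<^bsub>BB\<^esub> (qb x) = qb (inv x)"
  unfolding bos_def using carrier_BB N.inv_FactGroup N.rcos_inv unfolding bos_def by auto

lemma one_BB: "\<one>\<^bsub>BB\<^esub> = NN" unfolding bos_def by simp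

lemma topgroup_BB: "topgroup BB QB"
  unfolding topgroup_def
proof (intro conjI)
  show "group BB" by (rule group_BB)
  show "topspace QB = carrier BB" by (rule topspace_QB)
  have m: "continuous_map (prod_topology T T) T (\<lambda>(a, b). a \<otimes> b)"
    using topg unfolding topgroup_def by simp
  show "continuous_map (prod_topology QB QB) QB (\<lambda>(x, y). x \<otimes>\<^bsub>BB\<^esub> y)"
    by (rule quot_cont2[OF quot_qb open_qb m]) (auto simp: top_eq mult_qb)
  have i: "continuous_map T T (\<lambda>a. inv a)"
    using topg unfolding topgroup_def by simp
  show "continuous_map QB QB (\<lambda>x. inv\<^bsub>BB\<^esub> x)"
    by (rule quot_cont1[OF quot_qb i]) (auto simp: top_eq inv_qb)
qed

end



lemma topgroup_sub:
  assumes tg: "topgroup G T" and sg: "subgroup S G"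
  shows "topgroup (G\<lparr>carrier := S\<rparr>) (subtopology T S)"
proof -
  have g: "group G" and te: "topspace T = carrier G"
    and m: "continuous_map (prod_topology T T) T (\<lambda>(x, y). x \<otimes>\<^bsub>G\<^esub> y)"
    and i: "continuous_map T T (\<lambda>x. inv\<^bsub>G\<^esub> x)" using tg unfolding topgroup_def by auto
  have Ssub: "S \<subseteq> carrier G" using sg subgroup.subset by blast
  show ?thesis unfolding topgroup_def
  proof (intro conjI)
    show "group (G\<lparr>carrier := S\<rparr>)" using group.subgroup_imp_group[OF g sg] .
    show "topspace (subtopology T S) = carrier (G\<lparr>carrier := S\<rparr>)" using te Ssub by auto
    have "continuous_map (subtopology (prod_topology T T) (S \<times> S)) (subtopology T S) (\<lambda>(x, y). x \<otimes>\<^bsub>G\<^esub> y)"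
      by (rule continuous_map_into_subtopology[OF continuous_map_from_subtopology[OF m]])
         (auto simp: te subgroup.m_closed[OF sg])
    then show "continuous_map (prod_topology (subtopology T S) (subtopology T S)) (subtopology T S)
        (\<lambda>(x, y). x \<otimes>\<^bsub>G\<lparr>carrier := S\<rparr>\<^esub> y)"
      by (simp add: subtopology_Times)
    have "continuous_map (subtopology T S) (subtopology T S) (\<lambda>x. inv\<^bsub>G\<^esub> x)"
      by (rule continuous_map_into_subtopology[OF continuous_map_from_subtopology[OF i]])
         (auto simp: te subgroup.m_inv_closed[OF sg])
    then show "continuous_map (subtopology T S) (subtopology T S) (\<lambda>x. inv\<^bsub>G\<lparr>carrier := S\<rparr>\<^esub> x)"
      by (rule continuous_map_eq) (auto simp: group.m_inv_consistent[OF g sg])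
  qed
qed

context fp begin

abbreviation incl where "incl \<equiv> ftp_incl G H cG cH"
abbreviation proj where "proj \<equiv> ftp_proj H cH"

lemma incl_eq: "incl g = cls g \<one>\<^bsub>H\<^esub>" by (simp add: ftp_incl_def)

lemma proj_cls: "g \<in> carrier G \<Longrightarrow> h \<in> carrier H \<Longrightarrow> proj (cls g h) = H.qb h"
proof -
  assume gh: "g \<in> carrier G" "h \<in> carrier H"
  define p where "p = (SOME p. p \<in> cls g h)"
  have "p \<in> cls g h" using some_cls[OF gh] unfolding p_def .
  then have "p = (g, h) \<or> p = (cG \<otimes>\<^bsub>G\<^esub> g, cH \<otimes>\<^bsub>H\<^esub> h)" using gh by (simp add: cls_eq)
  then have d: "snd p = h \<or> snd p = cH \<otimes>\<^bsub>H\<^esub> h" by force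
  have e: "H.qb h = H.qb (cH \<otimes>\<^bsub>H\<^esub> h)" using H.qb_iff[of h "cH \<otimes>\<^bsub>H\<^esub> h"] gh by simp
  have "proj (cls g h) = H.qb (snd p)" unfolding ftp_proj_def p_def ..
  then show ?thesis using d e by metis
qed

lemma grading_cls: "g \<in> carrier G \<Longrightarrow> h \<in> carrier H \<Longrightarrow> ftp_grading \<theta>G \<theta>H (cls g h) = (\<theta>G g \<noteq> \<theta>H h)"
proof -
  assume gh: "g \<in> carrier G" "h \<in> carrier H"
  define p where "p = (SOME p. p \<in> cls g h)"
  have "p \<in> cls g h" using some_cls[OF gh] unfolding p_def .
  then have "p = (g, h) \<or> p = (cG \<otimes>\<^bsub>G\<^esub> g, cH \<otimes>\<^bsub>H\<^esub> h)" using gh by (simp add: cls_eq)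
  moreover have "ftp_grading \<theta>G \<theta>H (cls g h) = (\<theta>G (fst p) \<noteq> \<theta>H (snd p))"
    unfolding ftp_grading_def p_def by (simp add: split_def Let_def)
  ultimately show ?thesis using gh by auto
qed

lemma incl_hom: "incl \<in> hom G FF"
  by (rule homI) (simp_all add: incl_eq mult_cls mm_def)

lemma proj_hom: "proj \<in> hom FF H.BB"
proof (rule homI)
  fix x assume "x \<in> carrier FF"
  then show "proj x \<in> carrier H.BB" by (auto simp: carrier_FF proj_cls H.carrier_BB)
next
  fix x y assume "x \<in> carrier FF" "y \<in> carrier FF"
  then obtain g h g' h' where "g \<in> carrier G" "h \<in> carrier H" "x = cls g h"
     "g' \<in> carrier G" "h' \<in> carrier H" "y = cls g' h'" by (auto simp: carrier_FF)
  then show "proj (x \<otimes>\<^bsub>FF\<^esub> y) = proj x \<otimes>\<^bsub>H.BB\<^esub> proj y"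
    by (simp add: mult_cls proj_cls H.mult_qb)
qed

lemma incl_cont: "continuous_map TG QF incl"
proof -
  have "continuous_map TG PT (\<lambda>g. (g, \<one>\<^bsub>H\<^esub>))" by (simp add: continuous_map_paired cid H.top_eq)
  from continuous_map_compose[OF this cont_q] show ?thesis
    by (rule continuous_map_eq) (simp add: incl_eq)
qed

lemma proj_cont: "continuous_map QF H.QB proj"
proof (rule continuous_compose_quotient_map[OF quot_q])
  have "continuous_map PT H.QB (H.qb \<circ> snd)" by (rule continuous_map_compose[OF continuous_map_snd H.cont_qb])
  then show "continuous_map PT H.QB (proj \<circ> (\<lambda>(g, h). cls g h))"
    by (rule continuous_map_eq) (auto simp: G.top_eq H.top_eq proj_cls)
qed

lemma qb_one: "H.qb \<one>\<^bsub>H\<^esub> = {\<one>\<^bsub>H\<^esub>, cH}" by (simp add: H.rcos_eq)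

lemma kernel_proj: "kernel FF H.BB proj = incl ` carrier G"
proof (intro equalityI subsetI)
  fix x assume "x \<in> kernel FF H.BB proj"
  then obtain g h where gh: "g \<in> carrier G" "h \<in> carrier H" "x = cls g h" "H.qb h = H.qb \<one>\<^bsub>H\<^esub>"
    by (auto simp: kernel_def carrier_FF proj_cls H.one_BB qb_one)
  then have "h = \<one>\<^bsub>H\<^esub> \<or> h = cH" using H.qb_iff[of "\<one>\<^bsub>H\<^esub>" h] by auto
  moreover have "cls g cH = cls (cG \<otimes>\<^bsub>G\<^esub> g) \<one>\<^bsub>H\<^esub>"
    using cls_c[of "cG \<otimes>\<^bsub>G\<^esub> g" "\<one>\<^bsub>H\<^esub>"] gh by simp
  ultimately show "x \<in> incl ` carrier G" using gh by (auto simp: incl_eq)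
next
  fix x assume "x \<in> incl ` carrier G"
  then show "x \<in> kernel FF H.BB proj"
    by (auto simp: kernel_def incl_eq proj_cls H.one_BB qb_one)
qed

lemma proj_surj: "proj ` carrier FF = carrier H.BB"
proof (intro equalityI subsetI)
  fix y assume "y \<in> proj ` carrier FF" then show "y \<in> carrier H.BB"
    by (auto simp: carrier_FF proj_cls H.carrier_BB)
next
  fix y assume "y \<in> carrier H.BB"
  then obtain h where h: "h \<in> carrier H" "y = H.qb h" by (auto simp: H.carrier_BB)
  then have "y = proj (cls \<one>\<^bsub>G\<^esub> h)" by (simp add: proj_cls)
  then show "y \<in> proj ` carrier FF" using h by auto
qed

lemma incl_inj: "cH \<noteq> \<one>\<^bsub>H\<^esub> \<Longrightarrow> inj_on incl (carrier G)"
proof -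
  assume nt: "cH \<noteq> \<one>\<^bsub>H\<^esub>"
  show ?thesis unfolding inj_on_def
  proof (intro ballI impI)
    fix x y assume xy: "x \<in> carrier G" "y \<in> carrier G" "incl x = incl y"
    then have "(y = x \<and> \<one>\<^bsub>H\<^esub> = \<one>\<^bsub>H\<^esub>) \<or> (y = cG \<otimes>\<^bsub>G\<^esub> x \<and> \<one>\<^bsub>H\<^esub> = cH \<otimes>\<^bsub>H\<^esub> \<one>\<^bsub>H\<^esub>)"
      using cls_iff[of x "\<one>\<^bsub>H\<^esub>" y "\<one>\<^bsub>H\<^esub>"] by (simp add: incl_eq)
    then show "x = y" using nt by auto
  qed
qed

lemma part1: "cH \<noteq> \<one>\<^bsub>H\<^esub> \<Longrightarrow> short_exact_top G TG FF QF H.BB H.QB incl proj"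
  unfolding short_exact_top_def
  by (intro conjI G.topg topgroup_FF H.topgroup_BB incl_hom proj_hom incl_cont proj_cont incl_inj
    kernel_proj[symmetric] proj_surj)

end



context fp begin

abbreviation Gev where "Gev \<equiv> {g \<in> carrier G. \<not> \<theta>G g}"
abbreviation Tev where "Tev \<equiv> {x \<in> carrier FF. \<not> ftp_grading \<theta>G \<theta>H x}"

lemma sub_Gev: "subgroup Gev G"
proof (rule G.subgroupI)
  show "Gev \<noteq> {}" using G.th_one G.one_closed by blast
qed auto

lemma th_ig: "g \<in> carrier G \<Longrightarrow> \<theta>G (if b then cG \<otimes>\<^bsub>G\<^esub> inv\<^bsub>G\<^esub> g else inv\<^bsub>G\<^esub> g) = \<theta>G g"
  by simp

lemma th_mm: "g \<in> carrier G \<Longrightarrow> g' \<in> carrier G \<Longrightarrow> \<theta>G (mm g h g' h') = (\<theta>G g \<noteq> \<theta>G g')"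
  by (simp add: mm_def)

lemma sub_Tev: "subgroup Tev FF"
proof (rule group.subgroupI[OF group_FF])
  show "Tev \<subseteq> carrier FF" by auto
  have "\<one>\<^bsub>FF\<^esub> \<in> Tev" by (simp add: one_FF grading_cls)
  then show "Tev \<noteq> {}" by blast
next
  fix a assume "a \<in> Tev"
  then obtain g h where gh: "g \<in> carrier G" "h \<in> carrier H" "a = cls g h" "\<not> (\<theta>G g \<noteq> \<theta>H h)"
    by (auto simp: carrier_FF grading_cls)
  show "inv\<^bsub>FF\<^esub> a \<in> Tev"
    using gh by (simp add: inv_cls grading_cls th_ig del: G.th_mult)
next
  fix a b assume "a \<in> Tev" "b \<in> Tev"
  then obtain g h g' h' where gh: "g \<in> carrier G" "h \<in> carrier H" "a = cls g h" "\<not> (\<theta>G g \<noteq> \<theta>H h)"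
     "g' \<in> carrier G" "h' \<in> carrier H" "b = cls g' h'" "\<not> (\<theta>G g' \<noteq> \<theta>H h')"
    by (auto simp: carrier_FF grading_cls)
  show "a \<otimes>\<^bsub>FF\<^esub> b \<in> Tev"
    using gh by (simp add: mult_cls grading_cls th_mm)
qed

lemma part2:
  assumes ex: "\<exists>g\<in>carrier G. \<theta>G g" and nt: "cH \<noteq> \<one>\<^bsub>H\<^esub>"
  shows "short_exact_top (G\<lparr>carrier := Gev\<rparr>) (subtopology TG Gev) (FF\<lparr>carrier := Tev\<rparr>) (subtopology QF Tev)
     H.BB H.QB incl proj"
proof -
  obtain g0 where g0: "g0 \<in> carrier G" "\<theta>G g0" using ex by blast
  have incl_Tev: "incl g \<in> Tev" if "g \<in> Gev" for g using that by (simp add: incl_eq grading_cls)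
  have h1: "incl \<in> hom (G\<lparr>carrier := Gev\<rparr>) (FF\<lparr>carrier := Tev\<rparr>)"
  proof (rule homI)
    fix x assume "x \<in> carrier (G\<lparr>carrier := Gev\<rparr>)" then show "incl x \<in> carrier (FF\<lparr>carrier := Tev\<rparr>)"
      using incl_Tev by simp
  next
    fix x y assume "x \<in> carrier (G\<lparr>carrier := Gev\<rparr>)" "y \<in> carrier (G\<lparr>carrier := Gev\<rparr>)"
    then show "incl (x \<otimes>\<^bsub>G\<lparr>carrier := Gev\<rparr>\<^esub> y) = incl x \<otimes>\<^bsub>FF\<lparr>carrier := Tev\<rparr>\<^esub> incl y"
      by (simp add: incl_eq mult_cls mm_def)
  qed
  have h2: "proj \<in> hom (FF\<lparr>carrier := Tev\<rparr>) H.BB"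
    using proj_hom unfolding hom_def by (simp add: Pi_iff)
  have c1: "continuous_map (subtopology TG Gev) (subtopology QF Tev) incl"
    by (rule continuous_map_into_subtopology[OF continuous_map_from_subtopology[OF incl_cont]])
       (auto simp: G.top_eq incl_eq grading_cls)
  have c2: "continuous_map (subtopology QF Tev) H.QB proj"
    by (rule continuous_map_from_subtopology[OF proj_cont])
  have inj: "inj_on incl (carrier (G\<lparr>carrier := Gev\<rparr>))"
    using inj_on_subset[OF incl_inj[OF nt]] by auto
  have ker: "incl ` carrier (G\<lparr>carrier := Gev\<rparr>) = kernel (FF\<lparr>carrier := Tev\<rparr>) H.BB proj"
  proof (intro equalityI subsetI)
    fix x assume "x \<in> incl ` carrier (G\<lparr>carrier := Gev\<rparr>)"
    then obtain g where g: "g \<in> Gev" "x = incl g" by auto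
    then have "x \<in> kernel FF H.BB proj" using kernel_proj by auto
    then show "x \<in> kernel (FF\<lparr>carrier := Tev\<rparr>) H.BB proj" using incl_Tev g unfolding kernel_def by auto
  next
    fix x assume x: "x \<in> kernel (FF\<lparr>carrier := Tev\<rparr>) H.BB proj"
    then have "x \<in> kernel FF H.BB proj" "x \<in> Tev" unfolding kernel_def by auto
    then obtain g where g: "g \<in> carrier G" "x = incl g" "x \<in> Tev" using kernel_proj by auto
    then have "\<not> \<theta>G g" by (simp add: incl_eq grading_cls)
    then show "x \<in> incl ` carrier (G\<lparr>carrier := Gev\<rparr>)" using g by auto
  qed
  have surj: "proj ` carrier (FF\<lparr>carrier := Tev\<rparr>) = carrier H.BB"
  proof (intro equalityI subsetI)
    fix y assume "y \<in> proj ` carrier (FF\<lparr>carrier := Tev\<rparr>)"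
    then show "y \<in> carrier H.BB" using proj_surj by auto
  next
    fix y assume "y \<in> carrier H.BB"
    then obtain h where h: "h \<in> carrier H" "y = H.qb h" by (auto simp: H.carrier_BB)
    define g where "g = (if \<theta>H h then g0 else \<one>\<^bsub>G\<^esub>)"
    have g: "g \<in> carrier G" "\<theta>G g = \<theta>H h" using g0 by (auto simp: g_def)
    have "cls g h \<in> Tev" using g h by (simp add: grading_cls)
    moreover have "y = proj (cls g h)" using g h by (simp add: proj_cls)
    ultimately show "y \<in> proj ` carrier (FF\<lparr>carrier := Tev\<rparr>)" by auto
  qed
  show ?thesis unfolding short_exact_top_def
    by (intro conjI topgroup_sub[OF G.topg sub_Gev] topgroup_sub[OF topgroup_FF sub_Tev]
         H.topgroup_BB h1 h2 c1 c2 inj ker surj)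
qed

end

theorem mainTheorem4:
  fixes G :: "('a, 'm) monoid_scheme" and H :: "('b, 'n) monoid_scheme"
    and TG :: "'a topology" and TH :: "'b topology"
    and cG :: 'a and cH :: 'b and \<theta>G :: "'a \<Rightarrow> bool" and \<theta>H :: "'b \<Rightarrow> bool"
  assumes fG: "fermionic G TG cG \<theta>G"
    and fH: "fermionic H TH cH \<theta>H"
    and nontriv: "cH \<noteq> \<one>\<^bsub>H\<^esub>"
  shows "short_exact_top G TG (ftp G H cG cH \<theta>G \<theta>H) (ftp_top G H cG cH TG TH)
           (bos H cH) (bos_top H cH TH) (ftp_incl G H cG cH) (ftp_proj H cH)
       \<and> ((\<exists>g\<in>carrier G. \<theta>G g) \<longrightarrow>
           (let Gev = {g \<in> carrier G. \<not> \<theta>G g};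
                Tev = {x \<in> carrier (ftp G H cG cH \<theta>G \<theta>H). \<not> ftp_grading \<theta>G \<theta>H x}
            in short_exact_top (G\<lparr>carrier := Gev\<rparr>) (subtopology TG Gev)
                 ((ftp G H cG cH \<theta>G \<theta>H)\<lparr>carrier := Tev\<rparr>)
                 (subtopology (ftp_top G H cG cH TG TH) Tev)
                 (bos H cH) (bos_top H cH TH) (ftp_incl G H cG cH) (ftp_proj H cH)))"
proof -
  interpret fp G TG cG \<theta>G H TH cH \<theta>H
    unfolding fp_def ferm_def using fG fH by simp
  show ?thesis using part1[OF nontriv] part2[OF _ nontriv] by (simp add: Let_def)
qed



end
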